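(* Let $f:\mathbb{R}^d\to\mathbb{R}$ be differentiable with $L$-Lipschitz continuous gradient $\nabla f$. Consider the SUM iteration with $\mu\in[0,1)$, $\lambda\in[0,1/(1-\mu)]$ and positive step sizes $\{\eta_t\}$, where the noisy gradients satisfy $\mathbb{E}_t[g_t]=\nabla f(x_t)$ and $\mathbb{E}\|g_t\|^2\le G^2$ for all $t$. Then for every $t\ge1$, $$\mathbb{E}\big[\nabla f(x_t)^T m_t\big]\le -\sum_{k=1}^{t}\mu^{t-k}\eta_k\,\mathbb{E}\|\nabla f(x_k)\|^2+2L\sum_{k=1}^{t-1}\mu^{t-k}\,\mathbb{E}\|m_k\|^2+L\lambda^2G^2\sum_{k=1}^{t-1}\mu^{t-k}\eta_k^2 .$$
   Context: Stochastic unified momentum (SUM) iteration: given $x_1\in\mathbb{R}^d$, set $m_0=0$ and for $t=1,2,\dots$ $$m_t=\mu m_{t-1}-\eta_t g_t,\qquad x_{t+1}=x_t-\lambda\eta_t g_t+(1-\tilde\lambda)m_t,\qquad \tilde\lambda:=(1-\mu)\lambda,$$ where $g_t\in\mathbb{R}^d$ is a random vector (noisy gradient). $\mathbb{E}_t[\cdot]$ denotes the conditional expectation given $g_1,\dots,g_{t-1}$ (so $x_t$ and $m_{t-1}$ are determined by the conditioning), and $\mathbb{E}$ the total expectation. Norms are Euclidean. *)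

theory Defs
  imports "HOL-Analysis.Analysis" "HOL-Probability.Probability"
begin

text \<open>State of the SUM iteration: sum_state mu lam eta x1 g n = (x_(n+1), m_n),
  with m_0 = 0 and lambda-tilde = (1 - mu) * lam.\<close>
fun sum_state :: "real \<Rightarrow> real \<Rightarrow> (nat \<Rightarrow> real) \<Rightarrow> 'd::real_vector \<Rightarrow> (nat \<Rightarrow> 'd) \<Rightarrow> nat \<Rightarrow> 'd \<times> 'd" where
  "sum_state mu lam eta x1 g 0 = (x1, 0)"
| "sum_state mu lam eta x1 g (Suc n) =
     (let x = fst (sum_state mu lam eta x1 g n);
          m = snd (sum_state mu lam eta x1 g n);
          m' = mu *\<^sub>R m - eta (Suc n) *\<^sub>R g (Suc n);
          x' = x - (lam * eta (Suc n)) *\<^sub>R g (Suc n) + (1 - (1 - mu) * lam) *\<^sub>R m'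
      in (x', m'))"

definition sum_x :: "real \<Rightarrow> real \<Rightarrow> (nat \<Rightarrow> real) \<Rightarrow> 'd::real_vector \<Rightarrow> (nat \<Rightarrow> 'd) \<Rightarrow> nat \<Rightarrow> 'd" where
  "sum_x mu lam eta x1 g t = fst (sum_state mu lam eta x1 g (t - 1))"

definition sum_m :: "real \<Rightarrow> real \<Rightarrow> (nat \<Rightarrow> real) \<Rightarrow> 'd::real_vector \<Rightarrow> (nat \<Rightarrow> 'd) \<Rightarrow> nat \<Rightarrow> 'd" where
  "sum_m mu lam eta x1 g t = snd (sum_state mu lam eta x1 g t)"

text \<open>The sigma-algebra generated by g_1, ..., g_(t-1) (conditioning for E_t).\<close>
definition past_sigma :: "'a measure \<Rightarrow> (nat \<Rightarrow> 'a \<Rightarrow> 'd::euclidean_space) \<Rightarrow> nat \<Rightarrow> 'a measure" where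
  "past_sigma M g t = sigma (space M) {g k -` A \<inter> space M | k A. k \<in> {1..<t} \<and> A \<in> sets borel}"

end

theory Submission
  imports Defs
begin

lemma sq_sum_le: "((a::real) + b)\<^sup>2 \<le> 2 * a\<^sup>2 + 2 * b\<^sup>2"
proof -
  have "0 \<le> (a - b)\<^sup>2" by simp
  then show ?thesis by (simp add: power2_eq_square algebra_simps)
qed

lemma abs_prod_le: "\<bar>(a::real) * b\<bar> \<le> a\<^sup>2 + b\<^sup>2"
proof -
  have "2 * \<bar>a\<bar> * \<bar>b\<bar> \<le> \<bar>a\<bar>\<^sup>2 + \<bar>b\<bar>\<^sup>2" by (rule sum_squares_bound)
  moreover have "0 \<le> \<bar>a\<bar> * \<bar>b\<bar>" by simp
  moreover have "\<bar>a * b\<bar> = \<bar>a\<bar> * \<bar>b\<bar>" by (simp add: abs_mult)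
  ultimately show ?thesis by simp
qed

lemma prod_le_sq: "0 \<le> (x::real) \<Longrightarrow> 0 \<le> y \<Longrightarrow> x * y \<le> x\<^sup>2 + y\<^sup>2"
  using abs_prod_le[of x y] by simp

definition L2 :: "'a measure \<Rightarrow> ('a \<Rightarrow> 'b::{real_normed_vector,second_countable_topology}) \<Rightarrow> bool" where
  "L2 M h \<longleftrightarrow> h \<in> borel_measurable M \<and> integrable M (\<lambda>\<omega>. (norm (h \<omega>))\<^sup>2)"

lemma L2_const: "finite_measure M \<Longrightarrow> L2 M (\<lambda>_. c)"
  unfolding L2_def by (auto intro: finite_measure.integrable_const)

lemma L2_dom:
  assumes "L2 M (r::'a\<Rightarrow>real)" "h \<in> borel_measurable M" "\<And>\<omega>. norm (h \<omega>) \<le> r \<omega>"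
  shows "L2 M h"
  unfolding L2_def
proof (intro conjI)
  show "h \<in> borel_measurable M" by fact
  show "integrable M (\<lambda>\<omega>. (norm (h \<omega>))\<^sup>2)"
  proof (rule Bochner_Integration.integrable_bound)
    show "integrable M (\<lambda>\<omega>. (norm (r \<omega>))\<^sup>2)" using assms(1) by (simp add: L2_def)
    show "(\<lambda>\<omega>. (norm (h \<omega>))\<^sup>2) \<in> borel_measurable M" using assms(2) by measurable
    show "AE x in M. norm ((norm (h x))\<^sup>2) \<le> norm ((norm (r x))\<^sup>2)"
      using assms(3) by (auto intro!: power_mono simp: abs_le_square_iff)
  qed
qed

lemma L2_norm: "L2 M h \<Longrightarrow> L2 M (\<lambda>\<omega>. norm (h \<omega>))"
  unfolding L2_def by auto

lemma L2_scaleR: "L2 M h \<Longrightarrow> L2 M (\<lambda>\<omega>. c *\<^sub>R h \<omega>)"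
  unfolding L2_def by (auto simp: power_mult_distrib)

lemma L2_add:
  assumes "L2 M h1" "L2 M h2" shows "L2 M (\<lambda>\<omega>. h1 \<omega> + h2 \<omega>)"
proof -
  have r: "L2 M (\<lambda>\<omega>. norm (h1 \<omega>) + norm (h2 \<omega>))"
    unfolding L2_def
  proof (intro conjI)
    show "(\<lambda>\<omega>. norm (h1 \<omega>) + norm (h2 \<omega>)) \<in> borel_measurable M" using assms by (auto simp: L2_def)
    show "integrable M (\<lambda>\<omega>. (norm (norm (h1 \<omega>) + norm (h2 \<omega>)))\<^sup>2)"
    proof (rule Bochner_Integration.integrable_bound)
      show "integrable M (\<lambda>\<omega>. 2 * (norm (h1 \<omega>))\<^sup>2 + 2 * (norm (h2 \<omega>))\<^sup>2)"
        using assms by (auto simp: L2_def)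
      show "(\<lambda>\<omega>. (norm (norm (h1 \<omega>) + norm (h2 \<omega>)))\<^sup>2) \<in> borel_measurable M" using assms by (auto simp: L2_def)
      show "AE x in M. norm ((norm (norm (h1 x) + norm (h2 x)))\<^sup>2) \<le> norm (2 * (norm (h1 x))\<^sup>2 + 2 * (norm (h2 x))\<^sup>2)"
      proof (intro AE_I2)
        fix x
        have "(norm (h1 x) + norm (h2 x))\<^sup>2 \<le> 2 * (norm (h1 x))\<^sup>2 + 2 * (norm (h2 x))\<^sup>2"
          by (rule sq_sum_le)
        then show "norm ((norm (norm (h1 x) + norm (h2 x)))\<^sup>2) \<le> norm (2 * (norm (h1 x))\<^sup>2 + 2 * (norm (h2 x))\<^sup>2)"
          by simp
      qed
    qed
  qed
  show ?thesis
    by (rule L2_dom[OF r]) (use assms in \<open>auto simp: L2_def norm_triangle_ineq\<close>)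
qed

lemma L2_diff: "L2 M h1 \<Longrightarrow> L2 M h2 \<Longrightarrow> L2 M (\<lambda>\<omega>. h1 \<omega> - h2 \<omega>)"
  using L2_add[of M h1 "\<lambda>\<omega>. (-1) *\<^sub>R h2 \<omega>"] L2_scaleR[of M h2 "-1"] by simp

lemma L2_prod_int:
  assumes "L2 M (h1::'a \<Rightarrow> real)" "L2 M h2"
  shows "integrable M (\<lambda>\<omega>. h1 \<omega> * h2 \<omega>)"
proof (rule Bochner_Integration.integrable_bound)
  show "integrable M (\<lambda>\<omega>. (norm (h1 \<omega>))\<^sup>2 + (norm (h2 \<omega>))\<^sup>2)"
    using assms by (auto simp: L2_def)
  show "(\<lambda>\<omega>. h1 \<omega> * h2 \<omega>) \<in> borel_measurable M" using assms by (auto simp: L2_def)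
  show "AE x in M. norm (h1 x * h2 x) \<le> norm ((norm (h1 x))\<^sup>2 + (norm (h2 x))\<^sup>2)"
    by (intro AE_I2) (simp add: abs_prod_le)
qed

lemma L2_inner_comp:
  assumes "L2 M h" shows "L2 M (\<lambda>\<omega>. h \<omega> \<bullet> b)"
proof (rule L2_dom)
  show "L2 M (\<lambda>\<omega>. norm b *\<^sub>R norm (h \<omega>))" by (intro L2_scaleR L2_norm assms)
  show "(\<lambda>\<omega>. h \<omega> \<bullet> b) \<in> borel_measurable M" using assms by (auto simp: L2_def)
  show "norm (h \<omega> \<bullet> b) \<le> norm b *\<^sub>R norm (h \<omega>)" for \<omega>
    using Cauchy_Schwarz_ineq2[of "h \<omega>" b] by (simp add: mult.commute)
qed

lemma L2_inner_int:
  assumes "L2 M h1" "L2 M (h2::'a \<Rightarrow> 'd::euclidean_space)"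
  shows "integrable M (\<lambda>\<omega>. h1 \<omega> \<bullet> h2 \<omega>)"
proof (rule Bochner_Integration.integrable_bound)
  show "integrable M (\<lambda>\<omega>. norm (h1 \<omega>) * norm (h2 \<omega>))"
    by (rule L2_prod_int[OF L2_norm L2_norm]) fact+
  show "(\<lambda>\<omega>. h1 \<omega> \<bullet> h2 \<omega>) \<in> borel_measurable M" using assms by (auto simp: L2_def)
  show "AE x in M. norm (h1 x \<bullet> h2 x) \<le> norm (norm (h1 x) * norm (h2 x))"
    by (intro AE_I2) (simp add: Cauchy_Schwarz_ineq2)
qed

lemma sum_state_L2:
  assumes "finite_measure M" "\<And>k. 1 \<le> k \<Longrightarrow> k \<le> n \<Longrightarrow> L2 M (g k)"
  shows "L2 M (\<lambda>\<omega>. fst (sum_state mu lam eta x1 (\<lambda>j. g j \<omega>) n)) \<and>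
         L2 M (\<lambda>\<omega>. snd (sum_state mu lam eta x1 (\<lambda>j. g j \<omega>) n))"
  using assms(2)
proof (induction n)
  case 0
  then show ?case by (simp add: L2_const[OF assms(1)])
next
  case (Suc n)
  then have IH: "L2 M (\<lambda>\<omega>. fst (sum_state mu lam eta x1 (\<lambda>j. g j \<omega>) n))"
     "L2 M (\<lambda>\<omega>. snd (sum_state mu lam eta x1 (\<lambda>j. g j \<omega>) n))" by auto
  have gS: "L2 M (g (Suc n))" using Suc.prems by auto
  have m': "L2 M (\<lambda>\<omega>. mu *\<^sub>R snd (sum_state mu lam eta x1 (\<lambda>j. g j \<omega>) n) - eta (Suc n) *\<^sub>R g (Suc n) \<omega>)"
    by (intro L2_diff L2_scaleR IH gS)
  show ?case
    by (simp add: Let_def, intro conjI L2_add L2_diff L2_scaleR IH gS m')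
qed

lemma sum_state_meas:
  fixes g :: "nat \<Rightarrow> 'a \<Rightarrow> 'd::euclidean_space"
  assumes "\<And>k. 1 \<le> k \<Longrightarrow> k \<le> n \<Longrightarrow> g k \<in> borel_measurable N"
  shows "(\<lambda>\<omega>. fst (sum_state mu lam eta x1 (\<lambda>j. g j \<omega>) n)) \<in> borel_measurable N \<and>
         (\<lambda>\<omega>. snd (sum_state mu lam eta x1 (\<lambda>j. g j \<omega>) n)) \<in> borel_measurable N"
  using assms
proof (induction n)
  case 0
  then show ?case by simp
next
  case (Suc n)
  then have IH: "(\<lambda>\<omega>. fst (sum_state mu lam eta x1 (\<lambda>j. g j \<omega>) n)) \<in> borel_measurable N"
     "(\<lambda>\<omega>. snd (sum_state mu lam eta x1 (\<lambda>j. g j \<omega>) n)) \<in> borel_measurable N" by auto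
  have gS: "g (Suc n) \<in> borel_measurable N" using Suc.prems by auto
  show ?case
    by (simp add: Let_def, intro conjI borel_measurable_add borel_measurable_diff borel_measurable_scaleR measurable_const IH gS, auto)
qed

lemma sum_m_Suc: "sum_m mu lam eta x1 G (Suc n) = mu *\<^sub>R sum_m mu lam eta x1 G n - eta (Suc n) *\<^sub>R G (Suc n)"
  by (simp add: sum_m_def Let_def)

lemma sum_x_SucSuc: "sum_x mu lam eta x1 G (Suc (Suc n)) = sum_x mu lam eta x1 G (Suc n)
   - (lam * eta (Suc n)) *\<^sub>R G (Suc n) + (1 - (1 - mu) * lam) *\<^sub>R sum_m mu lam eta x1 G (Suc n)"
  by (simp add: sum_x_def sum_m_def Let_def)

lemma sum_x_1: "sum_x mu lam eta x1 G (Suc 0) = x1" by (simp add: sum_x_def)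
lemma sum_m_0: "sum_m mu lam eta x1 G 0 = 0" by (simp add: sum_m_def)

lemma past_sigma_space: "space (past_sigma M g t) = space M"
  unfolding past_sigma_def by (rule space_measure_of) auto

lemma past_sigma_sets: "sets (past_sigma M g t) = sigma_sets (space M) {g k -` A \<inter> space M | k A. k \<in> {1..<t} \<and> A \<in> sets borel}"
  unfolding past_sigma_def by (rule sets_measure_of) auto

lemma past_sigma_meas:
  assumes "1 \<le> k" "k < t" shows "g k \<in> borel_measurable (past_sigma M g t)"
proof (rule measurableI)
  fix A :: "'b set" assume "A \<in> sets borel"
  then have "g k -` A \<inter> space M \<in> {g k -` A \<inter> space M | k A. k \<in> {1..<t} \<and> A \<in> sets borel}"
    using assms by auto
  then show "g k -` A \<inter> space (past_sigma M g t) \<in> sets (past_sigma M g t)"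
    unfolding past_sigma_space past_sigma_sets by (rule sigma_sets.Basic)
qed auto

lemma past_sigma_subalg:
  assumes "\<And>k. k \<ge> 1 \<Longrightarrow> g k \<in> borel_measurable M"
  shows "subalgebra M (past_sigma M g t)"
  unfolding subalgebra_def past_sigma_space
proof
  show "sets (past_sigma M g t) \<subseteq> sets M"
    unfolding past_sigma_sets
    by (rule sets.sigma_sets_subset) (use assms measurable_sets in auto)
qed simp

lemma ptwise:
  fixes gradf :: "'d::euclidean_space \<Rightarrow> 'd"
  assumes lip: "L-lipschitz_on UNIV gradf" and c: "0 \<le> c" "c \<le> 1" and s: "0 \<le> s"
  shows "gradf (y - s *\<^sub>R v + c *\<^sub>R m) \<bullet> m \<le> gradf y \<bullet> m + L * (s\<^sup>2 * (norm v)\<^sup>2 + 2 * (norm m)\<^sup>2)"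
proof -
  have L0: "0 \<le> L" using lip by (rule lipschitz_on_nonneg)
  let ?a = "gradf (y - s *\<^sub>R v + c *\<^sub>R m)"
  have e: "?a \<bullet> m = gradf y \<bullet> m + (?a - gradf y) \<bullet> m" by (simp add: inner_diff_left)
  have cs: "(?a - gradf y) \<bullet> m \<le> norm (?a - gradf y) * norm m" by (rule norm_cauchy_schwarz)
  have l1: "norm (?a - gradf y) \<le> L * norm (- s *\<^sub>R v + c *\<^sub>R m)"
    using lipschitz_onD[OF lip, of "y - s *\<^sub>R v + c *\<^sub>R m" y] by (simp add: dist_norm)
  have l2: "norm (- s *\<^sub>R v + c *\<^sub>R m) \<le> s * norm v + norm m"
  proof -
    have "norm (- s *\<^sub>R v + c *\<^sub>R m) \<le> norm (- s *\<^sub>R v) + norm (c *\<^sub>R m)" by (rule norm_triangle_ineq)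
    also have "\<dots> = s * norm v + c * norm m" using s c by simp
    also have "\<dots> \<le> s * norm v + norm m" using c by (simp add: mult_left_le_one_le)
    finally show ?thesis .
  qed
  have l3: "norm (?a - gradf y) \<le> L * (s * norm v + norm m)"
    using l1 mult_left_mono[OF l2 L0] by linarith
  have l4: "norm (?a - gradf y) * norm m \<le> L * (s * norm v + norm m) * norm m"
    using mult_right_mono[OF l3 norm_ge_zero] .
  have "s * norm v * norm m \<le> (s * norm v)\<^sup>2 + (norm m)\<^sup>2"
    by (rule prod_le_sq) (use s in simp_all)
  then have "(s * norm v + norm m) * norm m \<le> s\<^sup>2 * (norm v)\<^sup>2 + 2 * (norm m)\<^sup>2"
    by (simp add: algebra_simps power2_eq_square)
  from mult_left_mono[OF this L0] have l5: "L * (s * norm v + norm m) * norm m \<le> L * (s\<^sup>2 * (norm v)\<^sup>2 + 2 * (norm m)\<^sup>2)"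
    by (simp add: mult.assoc)
  show ?thesis using e cs l4 l5 by linarith
qed

lemma mu_sum: "(mu::real) * (\<Sum>k=1..m. mu ^ (m - k) * f k) = (\<Sum>k=1..m. mu ^ (Suc m - k) * f k)"
  by (simp add: sum_distrib_left, intro sum.cong) (auto simp: Suc_diff_le)

lemma Ralg:
  fixes mu B C :: real
  shows "mu * (- (\<Sum>k=1..Suc n. mu ^ (Suc n - k) * a k) + B * (\<Sum>k=1..n. mu ^ (Suc n - k) * b k)
          + C * (\<Sum>k=1..n. mu ^ (Suc n - k) * d k)) + mu * (B * b (Suc n) + C * d (Suc n)) - a (Suc (Suc n))
   = - (\<Sum>k=1..Suc (Suc n). mu ^ (Suc (Suc n) - k) * a k) + B * (\<Sum>k=1..Suc n. mu ^ (Suc (Suc n) - k) * b k)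
          + C * (\<Sum>k=1..Suc n. mu ^ (Suc (Suc n) - k) * d k)"
proof -
  have e1: "mu * (\<Sum>k=1..Suc n. mu ^ (Suc n - k) * a k) = (\<Sum>k=1..Suc n. mu ^ (Suc (Suc n) - k) * a k)"
    by (rule mu_sum)
  have e2: "mu * (\<Sum>k=1..n. mu ^ (Suc n - k) * b k) = (\<Sum>k=1..n. mu ^ (Suc (Suc n) - k) * b k)"
    by (simp add: sum_distrib_left, intro sum.cong) (auto simp: Suc_diff_le)
  have e3: "mu * (\<Sum>k=1..n. mu ^ (Suc n - k) * d k) = (\<Sum>k=1..n. mu ^ (Suc (Suc n) - k) * d k)"
    by (simp add: sum_distrib_left, intro sum.cong) (auto simp: Suc_diff_le)
  have s1: "(\<Sum>k=1..Suc (Suc n). mu ^ (Suc (Suc n) - k) * a k) = (\<Sum>k=1..Suc n. mu ^ (Suc (Suc n) - k) * a k) + a (Suc (Suc n))"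
    by simp
  have s2: "(\<Sum>k=1..Suc n. mu ^ (Suc (Suc n) - k) * b k) = (\<Sum>k=1..n. mu ^ (Suc (Suc n) - k) * b k) + mu * b (Suc n)"
    by simp
  have s3: "(\<Sum>k=1..Suc n. mu ^ (Suc (Suc n) - k) * d k) = (\<Sum>k=1..n. mu ^ (Suc (Suc n) - k) * d k) + mu * d (Suc n)"
    by simp
  show ?thesis
    unfolding s1 s2 s3 e1[symmetric] e2[symmetric] e3[symmetric] by (simp add: algebra_simps)
qed

theorem lemma3p4:
  fixes M :: "'a measure"
    and f :: "'d::euclidean_space \<Rightarrow> real" and gradf :: "'d \<Rightarrow> 'd"
    and L mu lam G :: real and eta :: "nat \<Rightarrow> real"
    and x1 :: 'd and g :: "nat \<Rightarrow> 'a \<Rightarrow> 'd" and t :: nat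
  assumes "prob_space M"
    and diff: "\<And>x. (f has_derivative (\<lambda>h. gradf x \<bullet> h)) (at x)"
    and lip: "L-lipschitz_on UNIV gradf"
    and mu: "0 \<le> mu" "mu < 1"
    and lam: "0 \<le> lam" "lam \<le> 1 / (1 - mu)"
    and eta: "\<And>k. eta k > 0"
    and meas: "\<And>k. k \<ge> 1 \<Longrightarrow> g k \<in> borel_measurable M"
    and sqint: "\<And>k. k \<ge> 1 \<Longrightarrow> integrable M (\<lambda>\<omega>. (norm (g k \<omega>))\<^sup>2)"
    and unbiased: "\<And>k b. k \<ge> 1 \<Longrightarrow> b \<in> Basis \<Longrightarrow>
        AE \<omega> in M. real_cond_exp M (past_sigma M g k) (\<lambda>\<omega>. g k \<omega> \<bullet> b) \<omega>
                    = gradf (sum_x mu lam eta x1 (\<lambda>j. g j \<omega>) k) \<bullet> b"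
    and bounded: "\<And>k. k \<ge> 1 \<Longrightarrow> integral\<^sup>L M (\<lambda>\<omega>. (norm (g k \<omega>))\<^sup>2) \<le> G\<^sup>2"
    and t: "t \<ge> 1"
  shows "integral\<^sup>L M (\<lambda>\<omega>. gradf (sum_x mu lam eta x1 (\<lambda>j. g j \<omega>) t) \<bullet> sum_m mu lam eta x1 (\<lambda>j. g j \<omega>) t)
     \<le> - (\<Sum>k=1..t. mu ^ (t - k) * eta k *
               integral\<^sup>L M (\<lambda>\<omega>. (norm (gradf (sum_x mu lam eta x1 (\<lambda>j. g j \<omega>) k)))\<^sup>2))
       + 2 * L * (\<Sum>k=1..t-1. mu ^ (t - k) *
               integral\<^sup>L M (\<lambda>\<omega>. (norm (sum_m mu lam eta x1 (\<lambda>j. g j \<omega>) k))\<^sup>2))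
       + L * lam\<^sup>2 * G\<^sup>2 * (\<Sum>k=1..t-1. mu ^ (t - k) * (eta k)\<^sup>2)"
proof -
  interpret prob_space M by fact
  have fm: "finite_measure M" by unfold_locales
  have gL2: "\<And>k. k \<ge> 1 \<Longrightarrow> L2 M (g k)" using meas sqint by (simp add: L2_def)
  have gL2': "\<And>k. 1 \<le> k \<Longrightarrow> k \<le> n \<Longrightarrow> L2 M (g k)" for n using gL2 by simp
  define X where "X k \<omega> = sum_x mu lam eta x1 (\<lambda>j. g j \<omega>) k" for k \<omega>
  define Mo where "Mo k \<omega> = sum_m mu lam eta x1 (\<lambda>j. g j \<omega>) k" for k \<omega>
  define c where "c = 1 - (1 - mu) * lam"
  have L0: "0 \<le> L" using lip by (rule lipschitz_on_nonneg)
  have cl: "(1 - mu) * lam \<le> 1" using lam mu by (simp add: le_divide_eq mult.commute)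
  have c0: "0 \<le> c" using cl by (simp add: c_def)
  have c1: "c \<le> 1" using lam mu by (simp add: c_def)
  have XL2: "L2 M (X k)" for k
  proof -
    have "L2 M (\<lambda>\<omega>. fst (sum_state mu lam eta x1 (\<lambda>j. g j \<omega>) (k-1)))"
      by (rule conjunct1[OF sum_state_L2[OF fm gL2']])
    moreover have "X k = (\<lambda>\<omega>. fst (sum_state mu lam eta x1 (\<lambda>j. g j \<omega>) (k-1)))"
      by (simp add: X_def sum_x_def fun_eq_iff)
    ultimately show ?thesis by simp
  qed
  have MoL2: "L2 M (Mo k)" for k
  proof -
    have "L2 M (\<lambda>\<omega>. snd (sum_state mu lam eta x1 (\<lambda>j. g j \<omega>) k))"
      by (rule conjunct2[OF sum_state_L2[OF fm gL2']])
    moreover have "Mo k = (\<lambda>\<omega>. snd (sum_state mu lam eta x1 (\<lambda>j. g j \<omega>) k))"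
      by (simp add: Mo_def sum_m_def fun_eq_iff)
    ultimately show ?thesis by simp
  qed
  have gm: "gradf \<in> borel_measurable borel"
    by (rule borel_measurable_continuous_onI[OF lipschitz_on_continuous_on[OF lip]])
  have GL2: "L2 M (\<lambda>\<omega>. gradf (X k \<omega>))" for k
  proof (rule L2_dom)
    show "L2 M (\<lambda>\<omega>. norm (gradf x1) + L *\<^sub>R norm (X k \<omega> - x1))"
      by (intro L2_add L2_const[OF fm] L2_scaleR L2_norm L2_diff XL2)
    show "(\<lambda>\<omega>. gradf (X k \<omega>)) \<in> borel_measurable M"
      using measurable_compose[OF _ gm, of "X k" M] XL2[of k] by (simp add: L2_def)
    show "norm (gradf (X k \<omega>)) \<le> norm (gradf x1) + L *\<^sub>R norm (X k \<omega> - x1)" for \<omega>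
    proof -
      have "norm (gradf (X k \<omega>) - gradf x1) \<le> L * norm (X k \<omega> - x1)"
        using lipschitz_onD[OF lip, of "X k \<omega>" x1] by (simp add: dist_norm)
      then show ?thesis using norm_triangle_ineq2[of "gradf (X k \<omega>)" "gradf x1"] by simp
    qed
  qed
  have key: "integral\<^sup>L M (\<lambda>\<omega>. gradf (X k \<omega>) \<bullet> g k \<omega>) = integral\<^sup>L M (\<lambda>\<omega>. (norm (gradf (X k \<omega>)))\<^sup>2)"
    if k: "k \<ge> 1" for k
  proof -
    define F where "F = past_sigma M g k"
    have sub: "subalgebra M F" unfolding F_def using meas by (rule past_sigma_subalg)
    have sfs: "sigma_finite_subalgebra M F"
      by (rule finite_measure_subalgebra_is_sigma_finite) (unfold_locales, fact sub)
    have XF: "X k \<in> borel_measurable F"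
    proof -
      have "(\<lambda>\<omega>. fst (sum_state mu lam eta x1 (\<lambda>j. g j \<omega>) (k-1))) \<in> borel_measurable F"
        unfolding F_def
      proof (rule conjunct1[OF sum_state_meas])
        fix j assume "1 \<le> j" "j \<le> k - 1"
        then show "g j \<in> borel_measurable (past_sigma M g k)"
          by (intro past_sigma_meas) auto
      qed
      moreover have "X k = (\<lambda>\<omega>. fst (sum_state mu lam eta x1 (\<lambda>j. g j \<omega>) (k-1)))"
        by (simp add: X_def sum_x_def fun_eq_iff)
      ultimately show ?thesis by simp
    qed
    have GF: "(\<lambda>\<omega>. gradf (X k \<omega>)) \<in> borel_measurable F"
      using measurable_compose[OF XF gm] by (simp add: o_def)
    have comp: "integral\<^sup>L M (\<lambda>\<omega>. (gradf (X k \<omega>) \<bullet> b) * (g k \<omega> \<bullet> b))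
              = integral\<^sup>L M (\<lambda>\<omega>. (gradf (X k \<omega>) \<bullet> b) * (gradf (X k \<omega>) \<bullet> b))" if b: "b \<in> Basis" for b
    proof -
      have int: "integrable M (\<lambda>\<omega>. (gradf (X k \<omega>) \<bullet> b) * (g k \<omega> \<bullet> b))"
        by (intro L2_prod_int L2_inner_comp GL2 gL2 k)
      have fF: "(\<lambda>\<omega>. gradf (X k \<omega>) \<bullet> b) \<in> borel_measurable F" using GF by (intro borel_measurable_inner) auto
      have gM: "(\<lambda>\<omega>. g k \<omega> \<bullet> b) \<in> borel_measurable M" using meas[OF k] by (intro borel_measurable_inner) auto
      have "integral\<^sup>L M (\<lambda>\<omega>. (gradf (X k \<omega>) \<bullet> b) * (g k \<omega> \<bullet> b))
          = integral\<^sup>L M (\<lambda>\<omega>. (gradf (X k \<omega>) \<bullet> b) * real_cond_exp M F (\<lambda>\<omega>. g k \<omega> \<bullet> b) \<omega>)"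
        using sigma_finite_subalgebra.real_cond_exp_intg(2)[OF sfs int fF gM] by simp
      also have "\<dots> = integral\<^sup>L M (\<lambda>\<omega>. (gradf (X k \<omega>) \<bullet> b) * (gradf (X k \<omega>) \<bullet> b))"
      proof (rule integral_cong_AE)
        show "(\<lambda>\<omega>. (gradf (X k \<omega>) \<bullet> b) * real_cond_exp M F (\<lambda>\<omega>. g k \<omega> \<bullet> b) \<omega>) \<in> borel_measurable M"
          using sigma_finite_subalgebra.real_cond_exp_intg(1)[OF sfs int fF gM] by (rule borel_measurable_integrable)
        show "(\<lambda>\<omega>. (gradf (X k \<omega>) \<bullet> b) * (gradf (X k \<omega>) \<bullet> b)) \<in> borel_measurable M"
          using L2_prod_int[OF L2_inner_comp[OF GL2] L2_inner_comp[OF GL2], of k b k b] by (rule borel_measurable_integrable)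
        show "AE \<omega> in M. (gradf (X k \<omega>) \<bullet> b) * real_cond_exp M F (\<lambda>\<omega>. g k \<omega> \<bullet> b) \<omega> = (gradf (X k \<omega>) \<bullet> b) * (gradf (X k \<omega>) \<bullet> b)"
          using unbiased[OF k b] unfolding F_def X_def by (auto elim!: AE_mp)
      qed
      finally show ?thesis .
    qed
    have "integral\<^sup>L M (\<lambda>\<omega>. gradf (X k \<omega>) \<bullet> g k \<omega>)
        = integral\<^sup>L M (\<lambda>\<omega>. \<Sum>b\<in>Basis. (gradf (X k \<omega>) \<bullet> b) * (g k \<omega> \<bullet> b))"
      by (rule Bochner_Integration.integral_cong[OF refl euclidean_inner])
    also have "\<dots> = (\<Sum>b\<in>Basis. integral\<^sup>L M (\<lambda>\<omega>. (gradf (X k \<omega>) \<bullet> b) * (g k \<omega> \<bullet> b)))"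
      by (rule Bochner_Integration.integral_sum) (intro L2_prod_int L2_inner_comp GL2 gL2 k)
    also have "\<dots> = (\<Sum>b\<in>Basis. integral\<^sup>L M (\<lambda>\<omega>. (gradf (X k \<omega>) \<bullet> b) * (gradf (X k \<omega>) \<bullet> b)))"
      by (intro sum.cong comp refl)
    also have "\<dots> = integral\<^sup>L M (\<lambda>\<omega>. \<Sum>b\<in>Basis. (gradf (X k \<omega>) \<bullet> b) * (gradf (X k \<omega>) \<bullet> b))"
      by (rule Bochner_Integration.integral_sum[symmetric]) (intro L2_prod_int L2_inner_comp GL2)
    also have "\<dots> = integral\<^sup>L M (\<lambda>\<omega>. (norm (gradf (X k \<omega>)))\<^sup>2)"
      by (rule Bochner_Integration.integral_cong[OF refl])
         (simp only: power2_norm_eq_inner euclidean_inner[of "gradf (X k _)" "gradf (X k _)"])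
    finally show ?thesis .
  qed
  define A where "A k = integral\<^sup>L M (\<lambda>\<omega>. gradf (X k \<omega>) \<bullet> Mo k \<omega>)" for k
  define Gk where "Gk k = integral\<^sup>L M (\<lambda>\<omega>. (norm (gradf (X k \<omega>)))\<^sup>2)" for k
  define Mk where "Mk k = integral\<^sup>L M (\<lambda>\<omega>. (norm (Mo k \<omega>))\<^sup>2)" for k
  define R where "R t = - (\<Sum>k=1..t. mu ^ (t - k) * (eta k * Gk k))
       + 2 * L * (\<Sum>k=1..t-1. mu ^ (t - k) * Mk k)
       + L * lam\<^sup>2 * G\<^sup>2 * (\<Sum>k=1..t-1. mu ^ (t - k) * (eta k)\<^sup>2)" for t
  have dec: "A (Suc n) = mu * integral\<^sup>L M (\<lambda>\<omega>. gradf (X (Suc n) \<omega>) \<bullet> Mo n \<omega>) - eta (Suc n) * Gk (Suc n)" for n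
  proof -
    have pw: "gradf (X (Suc n) \<omega>) \<bullet> Mo (Suc n) \<omega> = mu * (gradf (X (Suc n) \<omega>) \<bullet> Mo n \<omega>) - eta (Suc n) * (gradf (X (Suc n) \<omega>) \<bullet> g (Suc n) \<omega>)" for \<omega>
      by (simp add: Mo_def sum_m_Suc inner_diff_right)
    have i1: "integrable M (\<lambda>\<omega>. mu * (gradf (X (Suc n) \<omega>) \<bullet> Mo n \<omega>))"
      by (intro integrable_mult_right L2_inner_int GL2 MoL2)
    have i2: "integrable M (\<lambda>\<omega>. eta (Suc n) * (gradf (X (Suc n) \<omega>) \<bullet> g (Suc n) \<omega>))"
      by (intro integrable_mult_right L2_inner_int GL2 gL2) simp
    have "A (Suc n) = integral\<^sup>L M (\<lambda>\<omega>. mu * (gradf (X (Suc n) \<omega>) \<bullet> Mo n \<omega>)) - integral\<^sup>L M (\<lambda>\<omega>. eta (Suc n) * (gradf (X (Suc n) \<omega>) \<bullet> g (Suc n) \<omega>))"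
      unfolding A_def pw by (rule Bochner_Integration.integral_diff[OF i1 i2])
    also have "\<dots> = mu * integral\<^sup>L M (\<lambda>\<omega>. gradf (X (Suc n) \<omega>) \<bullet> Mo n \<omega>) - eta (Suc n) * Gk (Suc n)"
      using key[of "Suc n"] by (simp add: Gk_def)
    finally show ?thesis .
  qed
  have bd: "integral\<^sup>L M (\<lambda>\<omega>. gradf (X (Suc (Suc n)) \<omega>) \<bullet> Mo (Suc n) \<omega>)
      \<le> A (Suc n) + (2 * L * Mk (Suc n) + L * lam\<^sup>2 * G\<^sup>2 * (eta (Suc n))\<^sup>2)" for n
  proof -
    define s where "s = lam * eta (Suc n)"
    have s0: "0 \<le> s" using lam eta[of "Suc n"] by (simp add: s_def)
    have ia: "integrable M (\<lambda>\<omega>. gradf (X (Suc n) \<omega>) \<bullet> Mo (Suc n) \<omega>)"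
      by (intro L2_inner_int GL2 MoL2)
    have iq: "integrable M (\<lambda>\<omega>. (norm (g (Suc n) \<omega>))\<^sup>2)" using sqint by simp
    have ir: "integrable M (\<lambda>\<omega>. (norm (Mo (Suc n) \<omega>))\<^sup>2)" using MoL2 by (simp add: L2_def)
    have ib: "integrable M (\<lambda>\<omega>. L * (s\<^sup>2 * (norm (g (Suc n) \<omega>))\<^sup>2) + L * (2 * (norm (Mo (Suc n) \<omega>))\<^sup>2))"
      using iq ir by (intro Bochner_Integration.integrable_add integrable_mult_right)
    have "integral\<^sup>L M (\<lambda>\<omega>. gradf (X (Suc (Suc n)) \<omega>) \<bullet> Mo (Suc n) \<omega>)
       \<le> integral\<^sup>L M (\<lambda>\<omega>. gradf (X (Suc n) \<omega>) \<bullet> Mo (Suc n) \<omega> + (L * (s\<^sup>2 * (norm (g (Suc n) \<omega>))\<^sup>2) + L * (2 * (norm (Mo (Suc n) \<omega>))\<^sup>2)))"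
    proof (rule integral_mono)
      show "integrable M (\<lambda>\<omega>. gradf (X (Suc (Suc n)) \<omega>) \<bullet> Mo (Suc n) \<omega>)"
        by (intro L2_inner_int GL2 MoL2)
      show "integrable M (\<lambda>\<omega>. gradf (X (Suc n) \<omega>) \<bullet> Mo (Suc n) \<omega> + (L * (s\<^sup>2 * (norm (g (Suc n) \<omega>))\<^sup>2) + L * (2 * (norm (Mo (Suc n) \<omega>))\<^sup>2)))"
        using ia ib by (rule Bochner_Integration.integrable_add)
      fix \<omega>
      have eq: "X (Suc (Suc n)) \<omega> = X (Suc n) \<omega> - s *\<^sub>R g (Suc n) \<omega> + c *\<^sub>R Mo (Suc n) \<omega>"
        by (simp add: X_def Mo_def s_def c_def sum_x_SucSuc)
      show "gradf (X (Suc (Suc n)) \<omega>) \<bullet> Mo (Suc n) \<omega>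
         \<le> gradf (X (Suc n) \<omega>) \<bullet> Mo (Suc n) \<omega> + (L * (s\<^sup>2 * (norm (g (Suc n) \<omega>))\<^sup>2) + L * (2 * (norm (Mo (Suc n) \<omega>))\<^sup>2))"
        using ptwise[OF lip c0 c1 s0, of "X (Suc n) \<omega>" "g (Suc n) \<omega>" "Mo (Suc n) \<omega>"]
        unfolding eq[symmetric] by (simp add: distrib_left)
    qed
    also have "\<dots> = A (Suc n) + (L * (s\<^sup>2 * integral\<^sup>L M (\<lambda>\<omega>. (norm (g (Suc n) \<omega>))\<^sup>2)) + L * (2 * Mk (Suc n)))"
      using ia ib iq ir by (simp add: A_def Mk_def)
    also have "\<dots> \<le> A (Suc n) + (L * (s\<^sup>2 * G\<^sup>2) + L * (2 * Mk (Suc n)))"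
      using bounded[of "Suc n"] L0 by (simp add: mult_left_mono)
    also have "\<dots> = A (Suc n) + (2 * L * Mk (Suc n) + L * lam\<^sup>2 * G\<^sup>2 * (eta (Suc n))\<^sup>2)"
      by (simp add: s_def power_mult_distrib algebra_simps)
    finally show ?thesis .
  qed
  have main: "A (Suc n) \<le> R (Suc n)" for n
  proof (induction n)
    case 0
    then show ?case using dec[of 0] by (simp add: R_def Mo_def sum_m_0)
  next
    case (Suc n)
    have "A (Suc (Suc n)) \<le> mu * (A (Suc n) + (2 * L * Mk (Suc n) + L * lam\<^sup>2 * G\<^sup>2 * (eta (Suc n))\<^sup>2)) - eta (Suc (Suc n)) * Gk (Suc (Suc n))"
      unfolding dec[of "Suc n"] using bd[of n] mu by (simp add: mult_left_mono)
    also have "\<dots> \<le> mu * (R (Suc n) + (2 * L * Mk (Suc n) + L * lam\<^sup>2 * G\<^sup>2 * (eta (Suc n))\<^sup>2)) - eta (Suc (Suc n)) * Gk (Suc (Suc n))"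
      using Suc.IH mu by (simp add: mult_left_mono)
    also have "\<dots> = R (Suc (Suc n))"
      unfolding R_def using Ralg[of mu n "\<lambda>k. eta k * Gk k" "2 * L" Mk "L * lam\<^sup>2 * G\<^sup>2" "\<lambda>k. (eta k)\<^sup>2"]
      by (simp add: algebra_simps)
    finally show ?case .
  qed
  from main[of "t - 1"] t have "A t \<le> R t" by simp
  then show ?thesis
    by (simp add: A_def R_def Gk_def Mk_def X_def Mo_def mult.assoc)
qed

end
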